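(* Fix integers $d\ge 2$ and $B\ge 2$. There exists a monotone function $\psi:\mathbb{R}\to\mathbb{R}$ such that for every function $f:[0,1]^d\to\mathbb{R}$ (no continuity assumed) there exists a function $g:\mathbb{R}\to\mathbb{R}$ with $$f(x_1,\ldots,x_d)=g\Big(\sum_{p=1}^d B^{-p}\psi(x_p)\Big)\qquad\text{for all }(x_1,\ldots,x_d)\in[0,1]^d.$$ *)

theory Defs
  imports Complex_Main
begin

end

theory Submission imports Defs begin

definition clamp :: "real \<Rightarrow> real" where "clamp x = max 0 (min 1 x)"
definition nk :: "real \<Rightarrow> nat \<Rightarrow> int" where "nk t k = floor (2^k * t)"
definition dg :: "real \<Rightarrow> nat \<Rightarrow> int" where
  "dg t k = (if k = 0 then nk t 0 else nk t k - 2 * nk t (k-1))"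
definition psi :: "real \<Rightarrow> real \<Rightarrow> real" where
  "psi M x = (\<Sum>k. of_int (nk (clamp x) k) / M^k)"

lemma clamp01: "0 \<le> clamp x \<and> clamp x \<le> 1" by (simp add: clamp_def)
lemma clamp_id: "0 \<le> x \<Longrightarrow> x \<le> 1 \<Longrightarrow> clamp x = x" by (simp add: clamp_def)
lemma clamp_mono: "x \<le> y \<Longrightarrow> clamp x \<le> clamp y" by (simp add: clamp_def)

lemma nk_bounds: assumes "0 \<le> t" "t \<le> 1" shows "0 \<le> nk t k \<and> nk t k \<le> 2^k"
proof -
  have "0 \<le> 2^k * t" using assms by simp
  moreover have "2^k * t \<le> 2^k" using assms by simp
  ultimately show ?thesis unfolding nk_def
    by (metis floor_le_iff floor_of_int floor_mono of_int_numeral of_int_power zero_le_floor)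
qed

lemma summable_nk: fixes M :: real assumes "M > 2" "0 \<le> t" "t \<le> 1"
  shows "summable (\<lambda>k. of_int (nk t k) / M^k)"
proof (rule summable_comparison_test[where g="\<lambda>k. (2/M)^k"])
  show "summable (\<lambda>k. (2/M)^k)" using assms by (intro summable_geometric) auto
  show "\<exists>N. \<forall>n\<ge>N. norm (of_int (nk t n) / M ^ n) \<le> (2 / M) ^ n"
  proof (intro exI allI impI)
    fix n
    have "0 \<le> nk t n \<and> nk t n \<le> 2^n" using nk_bounds assms by auto
    hence "0 \<le> real_of_int (nk t n) \<and> real_of_int (nk t n) \<le> 2^n"
      by (metis of_int_le_iff of_int_0 of_int_numeral of_int_power)
    thus "norm (of_int (nk t n) / M ^ n) \<le> (2 / M) ^ n" using assms
      by (simp add: power_divide divide_right_mono)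
  qed
qed

lemma psi_mono: fixes M :: real assumes "M > 2" shows "mono (psi M)"
proof (rule monoI)
  fix x y :: real assume "x \<le> y"
  hence c: "clamp x \<le> clamp y" by (rule clamp_mono)
  show "psi M x \<le> psi M y" unfolding psi_def
  proof (rule suminf_le)
    fix n
    have "nk (clamp x) n \<le> nk (clamp y) n" unfolding nk_def using c
      by (intro floor_mono) simp
    thus "of_int (nk (clamp x) n) / M ^ n \<le> of_int (nk (clamp y) n) / M ^ n"
      using assms by (intro divide_right_mono) auto
  qed (use summable_nk assms clamp01 in auto)
qed

lemma floor2: "floor (2*y) - 2 * floor (y::real) \<in> {0,1}"
proof -
  have "of_int (floor y) \<le> y" "y < of_int (floor y) + 1" by linarith+
  hence "2 * floor y \<le> floor (2*y)" "floor (2*y) < 2 * floor y + 2" by linarith+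
  thus ?thesis by auto
qed

lemma dg_bounds: assumes "0 \<le> t" "t \<le> 1" shows "0 \<le> dg t k \<and> dg t k \<le> 1"
proof (cases k)
  case 0 thus ?thesis using assms by (auto simp: dg_def nk_def)
next
  case (Suc j)
  have "dg t k = floor (2 * (2^j*t)) - 2 * floor (2^j * t)"
    using Suc by (simp add: dg_def nk_def mult.assoc)
  thus ?thesis using floor2[of "2^j*t"] by auto
qed

lemma dg_sums: fixes M :: real assumes "M > 2" "0 \<le> t" "t \<le> 1"
  shows "(\<lambda>k. of_int (dg t k) / M^k) sums ((1 - 2/M) * (\<Sum>k. of_int (nk t k) / M^k))"
proof -
  define f where "f k = of_int (nk t k) / M^k" for k
  define S where "S = suminf f"
  have fs: "f sums S" unfolding S_def f_def using summable_sums[OF summable_nk[OF assms]] by simp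
  have f1: "(\<lambda>k. f (Suc k)) sums (S - f 0)" using fs by (simp add: sums_Suc_iff)
  have f2: "(\<lambda>k. 2/M * f k) sums (2/M * S)" using fs by (rule sums_mult)
  have "(\<lambda>k. f (Suc k) - 2/M * f k) sums (S - f 0 - 2/M * S)" using f1 f2 by (rule sums_diff)
  moreover have "\<And>k. of_int (dg t (Suc k)) / M^(Suc k) = f (Suc k) - 2/M * f k"
    using assms by (simp add: dg_def f_def field_simps)
  ultimately have "(\<lambda>k. of_int (dg t (Suc k)) / M^(Suc k)) sums (S - f 0 - 2/M * S)" by simp
  hence "(\<lambda>k. of_int (dg t k) / M^k) sums (S - f 0 - 2/M * S + of_int (dg t 0) / M^0)"
    by (rule sums_Suc)
  moreover have "of_int (dg t 0) / M^0 = f 0" by (simp add: dg_def f_def)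
  ultimately have "(\<lambda>k. of_int (dg t k) / M^k) sums ((1 - 2/M) * S)" by (simp add: algebra_simps)
  thus ?thesis unfolding S_def f_def by simp
qed


lemma fin_uniq:
  fixes a b :: "nat \<Rightarrow> int" and B :: int
  assumes "B \<ge> 2"
  shows "(\<forall>i<m. 0\<le>a i \<and> a i<B \<and> 0\<le>b i \<and> b i<B) \<Longrightarrow>
         (\<Sum>i<m. a i * B^i) = (\<Sum>i<m. b i * B^i) \<Longrightarrow> \<forall>i<m. a i = b i"
proof (induction m arbitrary: a b)
  case 0 thus ?case by simp
next
  case (Suc m)
  define X where "X = (\<Sum>i<m. a (Suc i) * B^i)"
  define Y where "Y = (\<Sum>i<m. b (Suc i) * B^i)"
  have ea: "(\<Sum>i<Suc m. a i * B^i) = a 0 + B * X"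
    unfolding X_def by (simp only: sum.lessThan_Suc_shift sum_distrib_left) (simp add: ac_simps)
  have eb: "(\<Sum>i<Suc m. b i * B^i) = b 0 + B * Y"
    unfolding Y_def by (simp only: sum.lessThan_Suc_shift sum_distrib_left) (simp add: ac_simps)
  have e: "a 0 + B * X = b 0 + B * Y" using Suc.prems(2) ea eb by linarith
  have p0: "0 \<le> a 0" "a 0 < B" "0 \<le> b 0" "b 0 < B" using Suc.prems(1) by auto
  have "(a 0 + B * X) mod B = a 0" using p0 by simp
  moreover have "(b 0 + B * Y) mod B = b 0" using p0 by simp
  ultimately have a0: "a 0 = b 0" using e by simp
  hence "B * X = B * Y" using e by simp
  hence XY: "X = Y" using assms by simp
  have "\<forall>i<m. a (Suc i) = b (Suc i)"
  proof (rule Suc.IH)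
    show "\<forall>i<m. 0 \<le> a (Suc i) \<and> a (Suc i) < B \<and> 0 \<le> b (Suc i) \<and> b (Suc i) < B"
      using Suc.prems(1) by simp
    show "(\<Sum>i<m. a (Suc i) * B ^ i) = (\<Sum>i<m. b (Suc i) * B ^ i)"
      using XY unfolding X_def Y_def .
  qed
  thus ?case using a0 by (auto simp: less_Suc_eq_0_disj)
qed

lemma inf_uniq:
  fixes a b :: "nat \<Rightarrow> int" and M :: real and D :: int
  assumes bnd: "\<And>k. 0\<le>a k \<and> a k \<le> D \<and> 0 \<le> b k \<and> b k \<le> D" and M: "M > D+1"
    and eq: "(\<Sum>k. a k / M^k) = (\<Sum>k. b k / M^k)"
  shows "a = b"
proof (rule ccontr)
  assume "a \<noteq> b"
  then obtain k0 where "a k0 \<noteq> b k0" by auto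
  then obtain k where k: "a k \<noteq> b k" and less: "\<And>j. j < k \<Longrightarrow> a j = b j"
    using exists_least_iff[of "\<lambda>k. a k \<noteq> b k"] by blast
  have D0: "0 \<le> D" using bnd[of 0] by auto
  have M1: "M > 1" using M D0 by linarith
  define c where "c j = (a j - b j) / M^j" for j
  have cb: "\<bar>c j\<bar> \<le> D * (1/M)^j" for j
  proof -
    have "\<bar>real_of_int (a j - b j)\<bar> \<le> D" using bnd[of j] by (simp add: abs_le_iff)
    thus ?thesis unfolding c_def using M1
      by (simp add: abs_divide power_divide divide_right_mono)
  qed
  have gs: "summable (\<lambda>j. D * (1/M)^j)" using M1 by (intro summable_mult summable_geometric) auto
  have cs: "summable c" by (rule summable_comparison_test[OF _ gs]) (use cb in auto)
  have sa: "summable (\<lambda>k. a k / M^k)"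
  proof (rule summable_comparison_test[OF _ gs], intro exI allI impI)
    fix j have "\<bar>real_of_int (a j)\<bar> \<le> D" using bnd[of j] by simp
    thus "norm (a j / M^j) \<le> D * (1/M)^j" using M1
      by (simp add: abs_divide power_divide divide_right_mono)
  qed
  have sb: "summable (\<lambda>k. b k / M^k)"
  proof (rule summable_comparison_test[OF _ gs], intro exI allI impI)
    fix j have "\<bar>real_of_int (b j)\<bar> \<le> D" using bnd[of j] by simp
    thus "norm (b j / M^j) \<le> D * (1/M)^j" using M1
      by (simp add: abs_divide power_divide divide_right_mono)
  qed
  have "suminf c = (\<Sum>k. a k / M^k) - (\<Sum>k. b k / M^k)"
    unfolding c_def using suminf_diff[OF sa sb] by (simp add: diff_divide_distrib)
  hence c0: "suminf c = 0" using eq by simp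
  have "sum c {..<k} = 0" using less unfolding c_def by simp
  hence s1: "(\<Sum>n. c (n + k)) = 0" using suminf_split_initial_segment[OF cs, of k] c0 by simp
  have cks: "summable (\<lambda>n. c (n + k))" using cs by (simp add: summable_iff_shift)
  have s2: "(\<Sum>n. c (Suc n + k)) = - c k"
    using suminf_split_head[OF cks] s1 by simp
  have ts: "summable (\<lambda>n. D * (1/M)^(Suc n + k))" using gs summable_iff_shift[of "\<lambda>j. D * (1/M)^j" "Suc k"]
    by (simp add: add.commute)
  have "\<bar>\<Sum>n. c (Suc n + k)\<bar> \<le> (\<Sum>n. D * (1/M)^(Suc n + k))"
  proof -
    have sn: "summable (\<lambda>n. norm (c (Suc n + k)))"
      by (rule summable_comparison_test[OF _ ts], rule exI[of _ 0], intro allI impI, unfold real_norm_def abs_abs, rule cb)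
    have "\<bar>\<Sum>n. c (Suc n + k)\<bar> \<le> (\<Sum>n. norm (c (Suc n + k)))"
      using summable_norm[OF sn] by simp
    also have "\<dots> \<le> (\<Sum>n. D * (1/M)^(Suc n + k))"
      by (rule suminf_le[OF _ sn ts], unfold real_norm_def, rule cb)
    finally show ?thesis .
  qed
  also have "(\<Sum>n. D * (1/M)^(Suc n + k)) = D * (1/M)^(Suc k) * (\<Sum>n. (1/M)^n)"
  proof -
    have e: "(\<lambda>n. D * (1/M)^(Suc n + k)) = (\<lambda>n. (D * (1/M)^(Suc k)) * (1/M)^n)"
      by (simp add: power_add algebra_simps)
    have "summable (\<lambda>n. (1/M)^n)" using M1 by (intro summable_geometric) auto
    from suminf_mult[OF this, of "D * (1/M)^(Suc k)"] show ?thesis unfolding e .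
  qed
  also have "\<dots> = D * (1/M)^(Suc k) * (1 / (1 - 1/M))"
    using M1 by (subst suminf_geometric) auto
  also have "\<dots> = D / (M - 1) * (1/M)^k"
    using M1 by (simp add: field_simps)
  also have "\<dots> < (1/M)^k"
  proof -
    have "D / (M - 1) < 1" using M M1 by (simp add: field_simps)
    moreover have "0 < (1/M)^k" using M1 by simp
    ultimately have "D / (M - 1) * (1/M)^k < 1 * (1/M)^k" by (intro mult_strict_right_mono)
    thus ?thesis by simp
  qed
  also have "(1/M)^k \<le> \<bar>c k\<bar>"
  proof -
    have "1 \<le> \<bar>real_of_int (a k - b k)\<bar>" using k by linarith
    thus ?thesis unfolding c_def using M1 by (simp add: abs_divide power_divide divide_right_mono)
  qed
  finally show False using s2 by simp
qed

lemma nk_from_dg: assumes "\<And>k. dg t k = dg s k" shows "nk t k = nk s k"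
proof (induction k)
  case 0 thus ?case using assms[of 0] by (simp add: dg_def)
next
  case (Suc k) thus ?case using assms[of "Suc k"] by (simp add: dg_def)
qed

lemma eq_from_nk: fixes t s :: real assumes "\<And>k. nk t k = nk s k" shows "t = s"
proof (rule ccontr)
  assume "t \<noteq> s"
  then consider "t < s" | "s < t" by linarith
  thus False
  proof cases
    case 1
    obtain k where k: "1 / (s - t) < 2^k" using real_arch_pow[of 2 "1/(s-t)"] by auto
    hence "1 < 2^k * (s - t)" using 1 by (simp add: field_simps)
    hence "2^k * t + 1 < 2^k * s" by (simp add: algebra_simps)
    hence "floor (2^k * t) < floor (2^k * s)" by linarith
    thus False using assms[of k] by (simp add: nk_def)
  next
    case 2
    obtain k where k: "1 / (t - s) < 2^k" using real_arch_pow[of 2 "1/(t-s)"] by auto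
    hence "1 < 2^k * (t - s)" using 2 by (simp add: field_simps)
    hence "2^k * s + 1 < 2^k * t" by (simp add: algebra_simps)
    hence "floor (2^k * s) < floor (2^k * t)" by linarith
    thus False using assms[of k] by (simp add: nk_def)
  qed
qed


lemma reidx1: "(\<Sum>p=1..d. (G::nat\<Rightarrow>'a::comm_monoid_add) p) = (\<Sum>j<d. G (Suc j))"
  by (induction d) auto

lemma reidx2:
  fixes F :: "nat \<Rightarrow> int" and B :: int
  shows "(\<Sum>p=1..d. F (p-1) * B^(d-p)) = (\<Sum>i<d. F (d - Suc i) * B^i)"
proof -
  have "(\<Sum>p=1..d. F (p-1) * B^(d-p)) = (\<Sum>j<d. F j * B^(d - Suc j))"
    by (subst reidx1) simp
  also have "\<dots> = (\<Sum>i<d. F (d - Suc i) * B^(d - Suc (d - Suc i)))"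
    by (rule sum.nat_diff_reindex[symmetric])
  also have "\<dots> = (\<Sum>i<d. F (d - Suc i) * B^i)"
    by (rule sum.cong) auto
  finally show ?thesis .
qed

definition Phi :: "real \<Rightarrow> nat \<Rightarrow> nat \<Rightarrow> real list \<Rightarrow> real" where
  "Phi M B d xs = (\<Sum>p=1..d. psi M (xs ! (p - 1)) / real B ^ p)"

definition EE :: "nat \<Rightarrow> nat \<Rightarrow> real list \<Rightarrow> nat \<Rightarrow> int" where
  "EE B d xs k = (\<Sum>p=1..d. dg (clamp (xs ! (p - 1))) k * int B ^ (d - p))"

lemma EE_sums:
  fixes M :: real assumes M: "M > 2" and B: "B \<ge> 1"
  shows "(\<lambda>k. of_int (EE B d xs k) / M^k) sums (real B ^ d * (1 - 2/M) * Phi M B d xs)"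
proof -
  have "\<And>p. p \<in> {1..d} \<Longrightarrow> (\<lambda>k. real B ^ (d-p) * (of_int (dg (clamp (xs ! (p - 1))) k) / M^k))
      sums (real B ^ (d-p) * ((1 - 2/M) * psi M (xs ! (p - 1))))"
    unfolding psi_def by (intro sums_mult dg_sums) (use M clamp01 in auto)
  hence "(\<lambda>k. \<Sum>p=1..d. real B ^ (d-p) * (of_int (dg (clamp (xs ! (p - 1))) k) / M^k))
      sums (\<Sum>p=1..d. real B ^ (d-p) * ((1 - 2/M) * psi M (xs ! (p - 1))))"
    by (rule sums_sum)
  moreover have "\<And>k. (\<Sum>p=1..d. real B ^ (d-p) * (of_int (dg (clamp (xs ! (p - 1))) k) / M^k))
      = of_int (EE B d xs k) / M^k"
    unfolding EE_def by (simp add: sum_divide_distrib mult.commute)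
  moreover have "(\<Sum>p=1..d. real B ^ (d-p) * ((1 - 2/M) * psi M (xs ! (p - 1))))
      = real B ^ d * (1 - 2/M) * Phi M B d xs"
    unfolding Phi_def sum_distrib_left
  proof (rule sum.cong)
    fix p assume p: "p \<in> {1..d}"
    have "real B ^ d = real B ^ (d - p) * real B ^ p" using p by (simp flip: power_add)
    thus "real B ^ (d-p) * ((1 - 2/M) * psi M (xs ! (p - 1))) =
          real B ^ d * (1 - 2/M) * (psi M (xs ! (p - 1)) / real B ^ p)"
      using B by (simp add: field_simps)
  qed simp
  ultimately show ?thesis by simp
qed

lemma EE_bnd: assumes "B \<ge> 1" shows "0 \<le> EE B d xs k \<and> EE B d xs k \<le> int (d * B^d)"
proof -
  have t: "\<And>p. p \<in> {1..d} \<Longrightarrow> 0 \<le> dg (clamp (xs ! (p - 1))) k * int B ^ (d - p) \<and>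
        dg (clamp (xs ! (p - 1))) k * int B ^ (d - p) \<le> int B ^ d"
  proof -
    fix p assume p: "p \<in> {1..d}"
    have db: "0 \<le> dg (clamp (xs ! (p - 1))) k \<and> dg (clamp (xs ! (p - 1))) k \<le> 1"
      using dg_bounds clamp01 by blast
    have "int B ^ (d - p) \<le> int B ^ d" using assms by (intro power_increasing) auto
    moreover have "0 \<le> int B ^ (d-p)" by simp
    ultimately show "0 \<le> dg (clamp (xs ! (p - 1))) k * int B ^ (d - p) \<and>
        dg (clamp (xs ! (p - 1))) k * int B ^ (d - p) \<le> int B ^ d"
      using db by (auto intro: order_trans[OF mult_right_mono[of _ 1]])
  qed
  have "EE B d xs k \<le> of_nat (card {1..d}) * int B ^ d"
    unfolding EE_def by (rule sum_bounded_above) (use t in auto)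
  moreover have "0 \<le> EE B d xs k" unfolding EE_def by (rule sum_nonneg) (use t in auto)
  ultimately show ?thesis by simp
qed

lemma Phi_inj:
  fixes B d :: nat
  assumes B: "B \<ge> 2" and M: "M = real (d * B^d + 3)"
    and xs: "length xs = d" "\<forall>x\<in>set xs. 0 \<le> x \<and> x \<le> 1"
    and ys: "length ys = d" "\<forall>x\<in>set ys. 0 \<le> x \<and> x \<le> 1"
    and eq: "Phi M B d xs = Phi M B d ys"
  shows "xs = ys"
proof -
  have M2: "M > 2" using M B by (simp add: add_pos_nonneg)
  have s1: "(\<Sum>k. of_int (EE B d xs k) / M^k) = real B ^ d * (1 - 2/M) * Phi M B d xs"
    using EE_sums[OF M2, of B d xs] B by (simp add: sums_iff)
  have s2: "(\<Sum>k. of_int (EE B d ys k) / M^k) = real B ^ d * (1 - 2/M) * Phi M B d ys"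
    using EE_sums[OF M2, of B d ys] B by (simp add: sums_iff)
  have sq: "(\<Sum>k. of_int (EE B d xs k) / M^k) = (\<Sum>k. of_int (EE B d ys k) / M^k)"
    unfolding s1 s2 eq ..
  have bd: "\<And>k. 0 \<le> EE B d xs k \<and> EE B d xs k \<le> int (d * B^d) \<and> 0 \<le> EE B d ys k \<and> EE B d ys k \<le> int (d * B^d)"
    using EE_bnd[of B] B by simp
  have MD: "real_of_int (int (d * B^d) + 1) < M" unfolding M by simp
  have EEq: "EE B d xs = EE B d ys"
    by (rule inf_uniq[OF bd MD sq])
  have dgq: "dg (clamp (xs ! j)) k = dg (clamp (ys ! j)) k" if j: "j < d" for j k
  proof -
    have "\<forall>i<d. dg (clamp (xs ! (d - Suc i))) k = dg (clamp (ys ! (d - Suc i))) k"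
    proof (rule fin_uniq[where B="int B"])
      show "2 \<le> int B" using B by simp
      show "\<forall>i<d. 0 \<le> dg (clamp (xs ! (d - Suc i))) k \<and> dg (clamp (xs ! (d - Suc i))) k < int B \<and>
               0 \<le> dg (clamp (ys ! (d - Suc i))) k \<and> dg (clamp (ys ! (d - Suc i))) k < int B"
      proof (intro allI impI)
        fix i :: nat assume "i < d"
        have Bi: "2 \<le> int B" using B by simp
        have a: "0 \<le> dg (clamp (xs ! (d - Suc i))) k \<and> dg (clamp (xs ! (d - Suc i))) k \<le> 1"
          using dg_bounds clamp01 by blast
        have b: "0 \<le> dg (clamp (ys ! (d - Suc i))) k \<and> dg (clamp (ys ! (d - Suc i))) k \<le> 1"
          using dg_bounds clamp01 by blast
        show "0 \<le> dg (clamp (xs ! (d - Suc i))) k \<and> dg (clamp (xs ! (d - Suc i))) k < int B \<and>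
               0 \<le> dg (clamp (ys ! (d - Suc i))) k \<and> dg (clamp (ys ! (d - Suc i))) k < int B"
          using a b Bi by linarith
      qed
      show "(\<Sum>i<d. dg (clamp (xs ! (d - Suc i))) k * int B ^ i) =
            (\<Sum>i<d. dg (clamp (ys ! (d - Suc i))) k * int B ^ i)"
      proof -
        have "(\<Sum>i<d. dg (clamp (xs ! (d - Suc i))) k * int B ^ i) = EE B d xs k"
          unfolding EE_def by (rule reidx2[symmetric])
        also have "\<dots> = EE B d ys k" using EEq by simp
        also have "\<dots> = (\<Sum>i<d. dg (clamp (ys ! (d - Suc i))) k * int B ^ i)"
          unfolding EE_def by (rule reidx2)
        finally show ?thesis .
      qed
    qed
    from this[rule_format, of "d - Suc j"] j show ?thesis by simp
  qed
  show ?thesis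
  proof (rule nth_equalityI)
    show "length xs = length ys" using xs ys by simp
    fix j assume "j < length xs"
    hence j: "j < d" using xs by simp
    have "clamp (xs ! j) = clamp (ys ! j)"
      by (rule eq_from_nk, rule nk_from_dg, rule dgq[OF j])
    moreover have "xs ! j \<in> set xs" "ys ! j \<in> set ys" using j xs ys by auto
    ultimately show "xs ! j = ys ! j" using xs ys clamp_id by metis
  qed
qed

theorem lemma1:
  fixes d B :: nat
  assumes "d \<ge> 2" and "B \<ge> 2"
  shows "\<exists>\<psi> :: real \<Rightarrow> real. (mono \<psi> \<or> antimono \<psi>) \<and>
           (\<forall>f :: real list \<Rightarrow> real. \<exists>g :: real \<Rightarrow> real.
              \<forall>xs. length xs = d \<and> (\<forall>x\<in>set xs. 0 \<le> x \<and> x \<le> 1) \<longrightarrow>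
                 f xs = g (\<Sum>p=1..d. \<psi> (xs ! (p - 1)) / real B ^ p))"
proof -
  define M where "M = real (d * B^d + 3)"
  have M2: "M > 2" using assms by (simp add: M_def add_pos_nonneg)
  define V where "V xs \<longleftrightarrow> length xs = d \<and> (\<forall>x\<in>set xs. 0 \<le> x \<and> x \<le> (1::real))" for xs :: "real list"
  show ?thesis
  proof (rule exI[of _ "psi M"], intro conjI allI)
    show "mono (psi M) \<or> antimono (psi M)" using psi_mono[OF M2] by simp
    fix f :: "real list \<Rightarrow> real"
    define g where "g y = f (SOME xs. V xs \<and> Phi M B d xs = y)" for y
    show "\<exists>g. \<forall>xs. length xs = d \<and> (\<forall>x\<in>set xs. 0 \<le> x \<and> x \<le> 1) \<longrightarrow>
                 f xs = g (\<Sum>p=1..d. psi M (xs ! (p - 1)) / real B ^ p)"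
    proof (intro exI[of _ g] allI impI)
      fix xs :: "real list" assume h: "length xs = d \<and> (\<forall>x\<in>set xs. 0 \<le> x \<and> x \<le> 1)"
      hence Vx: "V xs" by (simp add: V_def)
      define ys where "ys = (SOME ys. V ys \<and> Phi M B d ys = Phi M B d xs)"
      have yy: "V ys \<and> Phi M B d ys = Phi M B d xs"
        unfolding ys_def by (rule someI[where P="\<lambda>ys. V ys \<and> Phi M B d ys = Phi M B d xs" and x=xs]) (use Vx in blast)
      have "ys = xs"
        by (rule Phi_inj[OF assms(2) M_def]) (use yy Vx in \<open>simp_all add: V_def\<close>)
      moreover have "(\<Sum>p=1..d. psi M (xs ! (p - 1)) / real B ^ p) = Phi M B d xs"
        by (simp add: Phi_def)
      ultimately show "f xs = g (\<Sum>p=1..d. psi M (xs ! (p - 1)) / real B ^ p)"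
        unfolding g_def ys_def by simp
    qed
  qed
qed

end
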